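(* Let $f:\mathbb{R}^n\to\mathbb{R}$ be convex and differentiable with $\nabla f$ $L$-Lipschitz continuous, and assume $X^*$ is non-empty. Then the sequence $\{x^k\}$ generated by Algorithm 3 (with $\nabla f(x^k)\ne0$ for all $k$) satisfies, for every $x^*\in X^*$ and every integer $K\ge1$, $$\frac1K\sum_{k=0}^{K-1}\|\nabla f(x^k)\|^2\le\frac{\|x^0-x^*\|^2}{K\kappa_4h_{\min}^2},$$ where $\alpha_{\min}=\frac{(1-\beta)\left(1-\frac{L\overline{h}}{4}\right)+\beta(1-\nu)}{2+2\beta^2\nu^2}$, $\kappa_4=\eta(2-\eta)\alpha_{\min}\left((1-\beta)\left(1-\frac{L\overline{h}}{4}\right)+\beta(1-\nu)\right)$ and $h_{\min}=\min\left\{\underline{h},\frac{\nu\theta}{\overline{h}\max\{L,1\}^2}\right\}$.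
   Context: $X^*=\{x:\nabla f(x)=0\}$ (the set of minimizers of the convex $f$). Algorithm 3: parameters $0<\mu<\nu<1$, $0<\underline{h}<1\le\gamma_0^0\le\overline{h}<\frac4L$, $0\le\beta\le1$, $\theta\in(0,1)$, $\tau>1$, $\eta\in(0,2)$, starting point $x^0$; run while $\nabla f(x^k)\neq0$. At iteration $k$: for $\gamma>0$ let $z^k(\gamma)=x^k-\gamma\nabla f(x^k)$ and $r_k(\gamma)=\gamma\|\nabla f(z^k(\gamma))-\nabla f(x^k)\|/\|z^k(\gamma)-x^k\|$; starting from $\gamma_0^k$, while $r_k(\gamma_l^k)>\nu$ set $\gamma_{l+1}^k=\gamma_l^k\theta\min\{1,1/r_k(\gamma_l^k)\}$; let $h_k$ be the first $\gamma_l^k$ with $r_k(\gamma_l^k)\le\nu$. Then $z^k=x^k-h_k\nabla f(x^k)$ and $x^{k+1}=x^k-\eta\alpha_kh_k\big(\nabla f(x^k)-\beta(\nabla f(x^k)-\nabla f(z^k))\big)$ with $$\alpha_k=\frac{(1-\beta)\left(1-\frac{Lh_k}{4}\right)\|x^k-z^k\|^2+\beta\langle x^k-z^k,h_k\nabla f(z^k)\rangle}{h_k^2\|\nabla f(x^k)-\beta(\nabla f(x^k)-\nabla f(z^k))\|^2};$$ finally $\gamma_0^{k+1}=\mathbf{P}_{[\underline{h},\overline{h}]}(\tau h_k)$ if $r_k(h_k)\le\mu$, else $\gamma_0^{k+1}=\mathbf{P}_{[\underline{h},\overline{h}]}(h_k)$, where $\mathbf{P}_{[a,b]}$ is projection onto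 $[a,b]$. *)

theory Defs
  imports "HOL-Analysis.Analysis"
begin

definition ratio :: "('a::real_normed_vector \<Rightarrow> 'a) \<Rightarrow> 'a \<Rightarrow> real \<Rightarrow> real" where
  "ratio g x \<gamma> = \<gamma> * norm (g (x - \<gamma> *\<^sub>R g x) - g x) / norm ((x - \<gamma> *\<^sub>R g x) - x)"

primrec trial :: "('a::real_normed_vector \<Rightarrow> 'a) \<Rightarrow> real \<Rightarrow> real \<Rightarrow> 'a \<Rightarrow> real \<Rightarrow> nat \<Rightarrow> real" where
  "trial g \<nu> \<theta> x \<gamma>0 0 = \<gamma>0"
| "trial g \<nu> \<theta> x \<gamma>0 (Suc l) =
     (let \<gamma> = trial g \<nu> \<theta> x \<gamma>0 l in
      if ratio g x \<gamma> > \<nu> then \<gamma> * \<theta> * min 1 (1 / ratio g x \<gamma>) else \<gamma>)"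

definition linesearch :: "('a::real_normed_vector \<Rightarrow> 'a) \<Rightarrow> real \<Rightarrow> real \<Rightarrow> 'a \<Rightarrow> real \<Rightarrow> real" where
  "linesearch g \<nu> \<theta> x \<gamma>0 =
     trial g \<nu> \<theta> x \<gamma>0 (LEAST l. ratio g x (trial g \<nu> \<theta> x \<gamma>0 l) \<le> \<nu>)"

definition proj_interval :: "real \<Rightarrow> real \<Rightarrow> real \<Rightarrow> real" where
  "proj_interval a b t = max a (min b t)"

(* one iteration of Algorithm 3: state (x^k, gamma_0^k) \<mapsto> (x^{k+1}, gamma_0^{k+1}) *)
definition alg3_step ::
  "('a::real_inner \<Rightarrow> 'a) \<Rightarrow> real \<Rightarrow> real \<Rightarrow> real \<Rightarrow> real \<Rightarrow> real \<Rightarrow> real \<Rightarrow> real \<Rightarrow> real \<Rightarrow> real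
   \<Rightarrow> 'a \<times> real \<Rightarrow> 'a \<times> real" where
  "alg3_step g L \<mu> \<nu> hlo hup \<beta> \<theta> \<tau> \<eta> s =
     (let x = fst s; \<gamma>0 = snd s;
          h = linesearch g \<nu> \<theta> x \<gamma>0;
          z = x - h *\<^sub>R g x;
          d = g x - \<beta> *\<^sub>R (g x - g z);
          \<alpha> = ((1 - \<beta>) * (1 - L * h / 4) * (norm (x - z))\<^sup>2 + \<beta> * inner (x - z) (h *\<^sub>R g z))
              / (h\<^sup>2 * (norm d)\<^sup>2);
          x' = x - (\<eta> * \<alpha> * h) *\<^sub>R d;
          \<gamma>0' = (if ratio g x h \<le> \<mu> then proj_interval hlo hup (\<tau> * h) else proj_interval hlo hup h)
      in (x', \<gamma>0'))"

primrec alg3 ::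
  "('a::real_inner \<Rightarrow> 'a) \<Rightarrow> real \<Rightarrow> real \<Rightarrow> real \<Rightarrow> real \<Rightarrow> real \<Rightarrow> real \<Rightarrow> real \<Rightarrow> real \<Rightarrow> real
   \<Rightarrow> 'a \<Rightarrow> real \<Rightarrow> nat \<Rightarrow> 'a \<times> real" where
  "alg3 g L \<mu> \<nu> hlo hup \<beta> \<theta> \<tau> \<eta> x0 \<gamma>00 0 = (x0, \<gamma>00)"
| "alg3 g L \<mu> \<nu> hlo hup \<beta> \<theta> \<tau> \<eta> x0 \<gamma>00 (Suc k) =
     alg3_step g L \<mu> \<nu> hlo hup \<beta> \<theta> \<tau> \<eta> (alg3 g L \<mu> \<nu> hlo hup \<beta> \<theta> \<tau> \<eta> x0 \<gamma>00 k)"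

end

theory Submission
  imports Defs
begin

lemma line_deriv:
  fixes f :: "'a::real_inner \<Rightarrow> real"
  assumes grad: "\<And>x. GDERIV f x :> g x"
  shows "((\<lambda>t. f (x + t *\<^sub>R v)) has_real_derivative inner v (g (x + t *\<^sub>R v))) (at t)"
proof -
  have d1: "((\<lambda>t. x + t *\<^sub>R v) has_derivative (\<lambda>s. s *\<^sub>R v)) (at t)"
    by (auto intro!: derivative_eq_intros)
  have d2: "(f has_derivative (\<lambda>h. inner h (g (x + t *\<^sub>R v)))) (at (x + t *\<^sub>R v))"
    using grad[of "x + t *\<^sub>R v"] by (simp add: gderiv_def)
  have "((\<lambda>t. f (x + t *\<^sub>R v)) has_derivative (\<lambda>s. inner (s *\<^sub>R v) (g (x + t *\<^sub>R v)))) (at t)"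
    using has_derivative_compose[OF d1 d2] by (simp add: o_def)
  moreover have "(\<lambda>s. inner (s *\<^sub>R v) (g (x + t *\<^sub>R v))) = (*) (inner v (g (x + t *\<^sub>R v)))"
    by (simp add: fun_eq_iff mult.commute)
  ultimately show ?thesis by (simp add: has_field_derivative_def)
qed

lemma tangent_below:
  fixes f :: "'a::real_inner \<Rightarrow> real"
  assumes convex: "convex_on UNIV f" and grad: "\<And>x. GDERIV f x :> g x"
  shows "f x + inner (g x) (y - x) \<le> f y"
proof -
  define v where "v = y - x"
  define \<phi> where "\<phi> = (\<lambda>t::real. f (x + t *\<^sub>R v))"
  have cv: "convex_on UNIV \<phi>"
  proof (rule convex_onI)
    fix t a b :: real assume "t > 0" "t < 1"
    have "x + ((1 - t) *\<^sub>R a + t *\<^sub>R b) *\<^sub>R v = (1 - t) *\<^sub>R (x + a *\<^sub>R v) + t *\<^sub>R (x + b *\<^sub>R v)"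
      by (simp add: algebra_simps)
    then show "\<phi> ((1 - t) *\<^sub>R a + t *\<^sub>R b) \<le> (1 - t) * \<phi> a + t * \<phi> b"
      unfolding \<phi>_def using convex_onD[OF convex, of t "x + a *\<^sub>R v" "x + b *\<^sub>R v"] \<open>t>0\<close> \<open>t<1\<close>
      by simp
  qed simp
  have "(\<phi> has_real_derivative inner v (g x)) (at 0 within UNIV)"
    using line_deriv[OF grad, of x v 0] by (simp add: \<phi>_def)
  from convex_on_imp_above_tangent[OF cv _ _ _ this, of 1]
  have "\<phi> 1 - \<phi> 0 \<ge> inner v (g x)" by simp
  then show ?thesis by (simp add: \<phi>_def v_def inner_commute)
qed

lemma descent:
  fixes f :: "'a::real_inner \<Rightarrow> real"
  assumes grad: "\<And>x. GDERIV f x :> g x" and lip: "L-lipschitz_on UNIV g"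
  shows "f y \<le> f x + inner (g x) (y - x) + L / 2 * (norm (y - x))\<^sup>2"
proof -
  define v where "v = y - x"
  define \<psi> where "\<psi> = (\<lambda>t::real. f (x + t *\<^sub>R v) - t * inner v (g x) - L / 2 * t\<^sup>2 * (norm v)\<^sup>2)"
  have "\<psi> 1 \<le> \<psi> 0"
  proof (rule DERIV_nonpos_imp_nonincreasing[where f=\<psi>])
    fix t :: real assume t: "0 \<le> t" "t \<le> 1"
    have D: "(\<psi> has_real_derivative inner v (g (x + t *\<^sub>R v)) - inner v (g x) - L / 2 * (2 * t) * (norm v)\<^sup>2) (at t)"
    proof -
      have a: "((\<lambda>t. t * inner v (g x)) has_real_derivative inner v (g x)) (at t)"
        by (auto intro!: derivative_eq_intros)
      have b: "((\<lambda>t. L / 2 * t\<^sup>2 * (norm v)\<^sup>2) has_real_derivative L / 2 * (2 * t) * (norm v)\<^sup>2) (at t)"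
        by (auto intro!: derivative_eq_intros)
      show ?thesis unfolding \<psi>_def
        by (intro DERIV_diff line_deriv[OF grad] a b)
    qed
    have "inner v (g (x + t *\<^sub>R v)) - inner v (g x) = inner v (g (x + t *\<^sub>R v) - g x)"
      by (simp add: inner_diff_right)
    also have "\<dots> \<le> norm v * norm (g (x + t *\<^sub>R v) - g x)"
      by (rule order_trans[OF _ norm_cauchy_schwarz]) simp
    also have "\<dots> \<le> norm v * (L * norm (t *\<^sub>R v))"
      using lipschitz_onD[OF lip, of "x + t *\<^sub>R v" x] by (simp add: dist_norm mult_left_mono)
    also have "\<dots> = L * t * (norm v)\<^sup>2" using t by (simp add: power2_eq_square)
    finally have le: "inner v (g (x + t *\<^sub>R v)) - inner v (g x) \<le> L * t * (norm v)\<^sup>2" .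
    have "inner v (g (x + t *\<^sub>R v)) - inner v (g x) - L / 2 * (2 * t) * (norm v)\<^sup>2 \<le> 0"
      using le by simp
    then show "\<exists>y. (\<psi> has_real_derivative y) (at t) \<and> y \<le> 0"
      using D by (intro exI[where x="inner v (g (x + t *\<^sub>R v)) - inner v (g x) - L / 2 * (2 * t) * (norm v)\<^sup>2"] conjI)
  qed simp
  then show ?thesis by (simp add: \<psi>_def v_def inner_commute)
qed


lemma cocoerc:
  fixes f :: "'a::real_inner \<Rightarrow> real"
  assumes convex: "convex_on UNIV f" and grad: "\<And>x. GDERIV f x :> g x"
    and lip: "L-lipschitz_on UNIV g" and Lpos: "L > 0" and xs: "g xs = 0"
  shows "(norm (g x))\<^sup>2 / L \<le> inner (g x) (x - xs)"
proof -
  define a where "a = g x"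
  define q where "q = (norm a)\<^sup>2 / L"
  define c where "c = 1 / L"
  have na: "inner a a = (norm a)\<^sup>2" by (simp add: power2_norm_eq_inner)
  have t1: "f xs \<le> f (x - c *\<^sub>R a)"
    using tangent_below[OF convex grad, of xs "x - c *\<^sub>R a"] xs by simp
  have d1: "f (x - c *\<^sub>R a) \<le> f x + inner a ((x - c *\<^sub>R a) - x) + L/2 * (norm ((x - c *\<^sub>R a) - x))\<^sup>2"
    using descent[OF grad lip, of "x - c *\<^sub>R a" x] by (simp add: a_def)
  have e1: "inner a ((x - c *\<^sub>R a) - x) = - q"
    by (simp add: q_def c_def na)
  have e2: "L/2 * (norm ((x - c *\<^sub>R a) - x))\<^sup>2 = q / 2"
    using Lpos by (simp add: q_def c_def power2_eq_square field_simps)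
  have t2: "f x + inner a ((xs + c *\<^sub>R a) - x) \<le> f (xs + c *\<^sub>R a)"
    using tangent_below[OF convex grad, of x "xs + c *\<^sub>R a"] by (simp add: a_def)
  have d2: "f (xs + c *\<^sub>R a) \<le> f xs + inner (g xs) ((xs + c *\<^sub>R a) - xs) + L/2 * (norm ((xs + c *\<^sub>R a) - xs))\<^sup>2"
    using descent[OF grad lip, of "xs + c *\<^sub>R a" xs] by simp
  have e3: "inner a ((xs + c *\<^sub>R a) - x) = - inner a (x - xs) + q"
    by (simp add: q_def c_def na inner_diff_right inner_add_right)
  have e4: "L/2 * (norm ((xs + c *\<^sub>R a) - xs))\<^sup>2 = q / 2"
    using Lpos by (simp add: q_def c_def power2_eq_square field_simps)
  have "q \<le> inner a (x - xs)"
    using t1 d1 e1 e2 t2 d2 e3 e4 xs by simp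
  then show ?thesis by (simp add: q_def a_def)
qed

lemma monot0:
  fixes f :: "'a::real_inner \<Rightarrow> real"
  assumes convex: "convex_on UNIV f" and grad: "\<And>x. GDERIV f x :> g x" and xs: "g xs = 0"
  shows "0 \<le> inner (g z) (z - xs)"
proof -
  have "f z + inner (g z) (xs - z) \<le> f xs" by (rule tangent_below[OF convex grad])
  moreover have "f xs \<le> f z" using tangent_below[OF convex grad, of xs z] xs by simp
  moreover have "inner (g z) (xs - z) = - inner (g z) (z - xs)"
    by (simp add: inner_diff_right)
  ultimately show ?thesis by linarith
qed

lemma ratio_le:
  fixes g :: "'a::real_normed_vector \<Rightarrow> 'a"
  assumes lip: "L-lipschitz_on UNIV g" and gx: "g x \<noteq> 0" and \<gamma>: "\<gamma> > 0"
  shows "ratio g x \<gamma> \<le> L * \<gamma>" "0 \<le> ratio g x \<gamma>"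
    "ratio g x \<gamma> = norm (g (x - \<gamma> *\<^sub>R g x) - g x) / norm (g x)"
proof -
  have n: "norm ((x - \<gamma> *\<^sub>R g x) - x) = \<gamma> * norm (g x)" using \<gamma> by simp
  show eq: "ratio g x \<gamma> = norm (g (x - \<gamma> *\<^sub>R g x) - g x) / norm (g x)"
    unfolding ratio_def n using \<gamma> gx by simp
  have "norm (g (x - \<gamma> *\<^sub>R g x) - g x) \<le> L * (\<gamma> * norm (g x))"
    using lipschitz_onD[OF lip, of "x - \<gamma> *\<^sub>R g x" x] \<gamma> by (simp add: dist_norm)
  then show "ratio g x \<gamma> \<le> L * \<gamma>" unfolding eq using gx
    by (simp add: divide_le_eq mult.assoc)
  show "0 \<le> ratio g x \<gamma>" unfolding eq by simp
qed


context
  fixes g :: "'a::real_normed_vector \<Rightarrow> 'a" and L \<nu> \<theta> :: real and x :: 'a and \<gamma>0 :: real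
  assumes lip: "L-lipschitz_on UNIV g" and Lpos: "L > 0" and gx: "g x \<noteq> 0"
    and nu: "0 < \<nu>" and nu1: "\<nu> < 1" and th: "0 < \<theta>" "\<theta> < 1" and g0: "\<gamma>0 > 0"
begin

abbreviation "T \<equiv> trial g \<nu> \<theta> x \<gamma>0"
abbreviation "R \<equiv> ratio g x"

lemma trial_pos: "0 < T l"
proof (induction l)
  case 0 then show ?case using g0 by simp
next
  case (Suc l)
  show ?case
  proof (cases "R (T l) > \<nu>")
    case True
    then have "R (T l) > 0" using nu by linarith
    then have "min 1 (1 / R (T l)) > 0" by simp
    then show ?thesis using True Suc th by (simp add: Let_def)
  qed (use Suc in \<open>simp add: Let_def\<close>)
qed

lemma trial_step_le: "T (Suc l) \<le> T l"
proof (cases "R (T l) > \<nu>")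
  case True
  have "min 1 (1 / R (T l)) \<le> 1" by simp
  moreover have "min 1 (1 / R (T l)) \<ge> 0" using True nu by simp
  ultimately have "\<theta> * min 1 (1 / R (T l)) \<le> 1" using th
    by (metis less_eq_real_def mult_le_one)
  then have "T l * (\<theta> * min 1 (1 / R (T l))) \<le> T l * 1"
    using trial_pos[of l] by (intro mult_left_mono) auto
  then show ?thesis using True by (simp add: Let_def mult.assoc)
qed (simp add: Let_def)

lemma trial_le0: "T l \<le> \<gamma>0"
proof (induction l)
  case (Suc l) then show ?case using trial_step_le[of l] by linarith
qed simp

lemma trial_geom: "(\<forall>j<l. R (T j) > \<nu>) \<Longrightarrow> T l \<le> \<gamma>0 * \<theta> ^ l"
proof (induction l)
  case 0 then show ?case by simp
next
  case (Suc l)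
  then have IH: "T l \<le> \<gamma>0 * \<theta> ^ l" and r: "R (T l) > \<nu>" by auto
  have "min 1 (1 / R (T l)) \<le> 1" by simp
  moreover have "min 1 (1 / R (T l)) \<ge> 0" using r nu by simp
  ultimately have "T l * \<theta> * min 1 (1 / R (T l)) \<le> T l * \<theta> * 1"
    using trial_pos[of l] th by (intro mult_left_mono) auto
  also have "\<dots> \<le> \<gamma>0 * \<theta> ^ l * \<theta>" using IH th by simp
  finally show ?case using r by (simp add: Let_def mult_ac)
qed

lemma trial_exists: "\<exists>l. R (T l) \<le> \<nu>"
proof -
  obtain l where l: "\<theta> ^ l < \<nu> / (L * \<gamma>0)"
    using real_arch_pow_inv[of "\<nu> / (L * \<gamma>0)" \<theta>] nu Lpos g0 th by auto
  show ?thesis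
  proof (cases "\<forall>j<l. R (T j) > \<nu>")
    case True
    have "T l \<le> \<gamma>0 * \<theta> ^ l" by (rule trial_geom[OF True])
    also have "\<dots> \<le> \<gamma>0 * (\<nu> / (L * \<gamma>0))" using l g0 by (intro mult_left_mono) auto
    also have "\<dots> = \<nu> / L" using g0 by simp
    finally have "L * T l \<le> \<nu>" using Lpos by (simp add: field_simps)
    then have "R (T l) \<le> \<nu>" using ratio_le(1)[OF lip gx trial_pos[of l]] by linarith
    then show ?thesis by blast
  qed (auto simp: not_less)
qed

lemma linesearch_props:
  defines "h \<equiv> linesearch g \<nu> \<theta> x \<gamma>0"
  shows "0 < h" "h \<le> \<gamma>0" "ratio g x h \<le> \<nu>" "min \<gamma>0 (\<theta> * \<nu> / L) \<le> h"
proof -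
  define m where "m = (LEAST l. R (T l) \<le> \<nu>)"
  have hm: "h = T m" unfolding h_def linesearch_def m_def ..
  show "0 < h" unfolding hm by (rule trial_pos)
  show "h \<le> \<gamma>0" unfolding hm by (rule trial_le0)
  show "ratio g x h \<le> \<nu>" unfolding hm m_def using trial_exists by (rule LeastI_ex)
  show "min \<gamma>0 (\<theta> * \<nu> / L) \<le> h"
  proof (cases m)
    case 0 then show ?thesis using hm by simp
  next
    case (Suc j)
    then have "\<not> R (T j) \<le> \<nu>" unfolding m_def using not_less_Least[of j] by (metis lessI)
    then have r: "R (T j) > \<nu>" by simp
    have rl: "R (T j) \<le> L * T j" by (rule ratio_le(1)[OF lip gx trial_pos])
    have tp: "T j > 0" by (rule trial_pos)
    have hj: "h = T j * \<theta> * min 1 (1 / R (T j))" using hm Suc r by (simp add: Let_def)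
    have "\<theta> * \<nu> / L \<le> h"
    proof (cases "R (T j) \<le> 1")
      case True
      then have "h = T j * \<theta>" using hj r nu by (simp add: min_def)
      moreover have "\<nu> / L \<le> T j" using r rl Lpos by (simp add: divide_le_eq mult.commute)
      moreover have "\<theta> * (\<nu> / L) \<le> \<theta> * T j" using th \<open>\<nu> / L \<le> T j\<close> by (intro mult_left_mono) auto
      ultimately show ?thesis by (simp add: mult.commute)
    next
      case False
      then have "h = T j * \<theta> / R (T j)" using hj by (simp add: min_def)
      moreover have "1 / L \<le> T j / R (T j)" using rl False Lpos
        by (simp add: field_simps)
      moreover have "\<theta> * (1 / L) \<le> \<theta> * (T j / R (T j))"
        using th \<open>1 / L \<le> T j / R (T j)\<close> by (intro mult_left_mono) auto
      ultimately have "\<theta> / L \<le> h" by (simp add: mult.commute)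
      moreover have "\<theta> * \<nu> \<le> \<theta> * 1" using nu1 th by (intro mult_left_mono) auto
      then have "\<theta> * \<nu> / L \<le> \<theta> / L" using Lpos
        by (simp add: divide_right_mono)
      ultimately show ?thesis by linarith
    qed
    then show ?thesis by simp
  qed
qed

end


lemma step_ineq:
  fixes f :: "'a::real_inner \<Rightarrow> real"
  assumes convex: "convex_on UNIV f" and grad: "\<And>x. GDERIV f x :> g x"
    and lip: "L-lipschitz_on UNIV g" and Lpos: "L > 0" and xs: "g xs = 0" and gx: "g x \<noteq> 0"
    and hpos: "0 < h" and hup: "h \<le> hup" "hup < 4 / L"
    and r: "ratio g x h \<le> \<nu>" and nu: "0 < \<nu>" "\<nu> < 1" and beta: "0 \<le> \<beta>" "\<beta> \<le> 1"
    and eta: "0 < \<eta>" "\<eta> < 2" and hmin: "0 \<le> hmin" "hmin \<le> h"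
    and z_def: "z = x - h *\<^sub>R g x"
    and d_def: "d = g x - \<beta> *\<^sub>R (g x - g z)"
    and \<alpha>_def: "\<alpha> = ((1 - \<beta>) * (1 - L * h / 4) * (norm (x - z))\<^sup>2 + \<beta> * inner (x - z) (h *\<^sub>R g z)) / (h\<^sup>2 * (norm d)\<^sup>2)"
    and c_def: "c = (1 - \<beta>) * (1 - L * hup / 4) + \<beta> * (1 - \<nu>)"
  shows "(norm (x - (\<eta> * \<alpha> * h) *\<^sub>R d - xs))\<^sup>2
    \<le> (norm (x - xs))\<^sup>2 - \<eta> * (2 - \<eta>) * (c / (2 + 2 * \<beta>\<^sup>2 * \<nu>\<^sup>2)) * c * hmin\<^sup>2 * (norm (g x))\<^sup>2"
proof -
  define a where "a = g x"
  define b where "b = g z"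
  define n where "n = norm a"
  define \<delta> where "\<delta> = norm (b - a)"
  define N where "N = (1 - \<beta>) * (1 - L * h / 4) * n\<^sup>2 + \<beta> * inner a b"
  define D where "D = (2 + 2 * \<beta>\<^sup>2 * \<nu>\<^sup>2)"
  have npos: "n > 0" using gx by (simp add: n_def a_def)
  have xz: "x - z = h *\<^sub>R a" by (simp add: z_def a_def)
  have d_eq: "d = a + \<beta> *\<^sub>R (b - a)" by (simp add: d_def a_def b_def algebra_simps)
  have "ratio g x h = \<delta> / n"
    using ratio_le(3)[OF lip gx hpos] by (simp add: \<delta>_def n_def a_def b_def z_def)
  with r npos have del: "\<delta> \<le> \<nu> * n" by (simp add: divide_le_eq)
  have Lhup: "L * hup < 4"
  proof -
    show ?thesis using hup(2) Lpos by (simp add: less_divide_eq mult.commute)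
  qed
  have ab: "inner a b \<ge> (1 - \<nu>) * n\<^sup>2"
  proof -
    have "inner a b = n\<^sup>2 + inner a (b - a)"
      by (simp add: n_def inner_diff_right power2_norm_eq_inner)
    moreover have "inner a (b - a) \<ge> - (n * \<delta>)"
      using Cauchy_Schwarz_ineq2[of a "b - a"] by (simp add: n_def \<delta>_def abs_le_iff)
    moreover have "n * \<delta> \<le> n * (\<nu> * n)" using del npos by simp
    ultimately show ?thesis by (simp add: power2_eq_square algebra_simps)
  qed
  have cpos: "c \<ge> 0"
  proof -
    have "1 - L * hup / 4 > 0" using Lhup by simp
    then show ?thesis unfolding c_def using beta nu by (intro add_nonneg_nonneg mult_nonneg_nonneg) auto
  qed
  have Nc: "N \<ge> c * n\<^sup>2"
  proof -
    have "(1 - \<beta>) * (1 - L * hup / 4) \<le> (1 - \<beta>) * (1 - L * h / 4)"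
      using beta hup Lpos by (intro mult_left_mono) auto
    then have "(1 - \<beta>) * (1 - L * hup / 4) * n\<^sup>2 \<le> (1 - \<beta>) * (1 - L * h / 4) * n\<^sup>2"
      by (intro mult_right_mono) auto
    moreover have "\<beta> * ((1 - \<nu>) * n\<^sup>2) \<le> \<beta> * inner a b" using ab beta by (intro mult_left_mono) auto
    moreover have "c * n\<^sup>2 = (1 - \<beta>) * (1 - L * hup / 4) * n\<^sup>2 + \<beta> * ((1 - \<nu>) * n\<^sup>2)"
      by (simp add: c_def algebra_simps)
    ultimately show ?thesis unfolding N_def by linarith
  qed
  have dup: "norm d \<le> (1 + \<beta> * \<nu>) * n"
  proof -
    have "norm d \<le> n + \<beta> * \<delta>" unfolding d_eq n_def \<delta>_def
      using norm_triangle_ineq[of a "\<beta> *\<^sub>R (b - a)"] beta by simp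
    moreover have "\<beta> * \<delta> \<le> \<beta> * (\<nu> * n)" using del beta by (intro mult_left_mono) auto
    ultimately show ?thesis by (simp add: algebra_simps)
  qed
  have dlo: "norm d \<ge> (1 - \<beta> * \<nu>) * n"
  proof -
    have "norm d \<ge> n - \<beta> * \<delta>" unfolding d_eq n_def \<delta>_def
      using norm_triangle_ineq2[of a "- (\<beta> *\<^sub>R (b - a))"] beta by simp
    moreover have "\<beta> * \<delta> \<le> \<beta> * (\<nu> * n)" using del beta by (intro mult_left_mono) auto
    ultimately show ?thesis by (simp add: algebra_simps)
  qed
  have bnu: "\<beta> * \<nu> < 1"
  proof -
    have "\<beta> * \<nu> \<le> 1 * \<nu>" using beta nu by (intro mult_right_mono) auto
    then show ?thesis using nu by linarith
  qed
  have dpos: "norm d > 0" using dlo bnu npos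
    by (smt (verit) mult_pos_pos)
  have d2: "(norm d)\<^sup>2 \<le> D * n\<^sup>2"
  proof -
    have "(norm d)\<^sup>2 \<le> ((1 + \<beta> * \<nu>) * n)\<^sup>2" using dup by (intro power_mono) auto
    also have "\<dots> \<le> D * n\<^sup>2"
    proof -
      have "(1 + \<beta> * \<nu>)\<^sup>2 \<le> D" unfolding D_def
        using sum_squares_ge_zero[of "1 - \<beta> * \<nu>" 0]
        by (simp add: power2_eq_square algebra_simps)
      then show ?thesis by (simp add: power_mult_distrib mult_right_mono)
    qed
    finally show ?thesis .
  qed
  have alpha_eq: "\<alpha> = N / (norm d)\<^sup>2"
  proof -
    have "(1 - \<beta>) * (1 - L * h / 4) * (norm (x - z))\<^sup>2 + \<beta> * inner (x - z) (h *\<^sub>R g z) = h\<^sup>2 * N"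
      unfolding xz N_def b_def[symmetric] using hpos
      by (simp add: n_def power2_eq_square algebra_simps)
    then show ?thesis unfolding \<alpha>_def using hpos by simp
  qed
  have Npos: "N \<ge> 0" using Nc cpos by (meson order_trans zero_le_mult_iff zero_le_power2)
  have apos: "\<alpha> \<ge> 0" unfolding alpha_eq using Npos by simp
  have aN: "\<alpha> * (norm d)\<^sup>2 = N" unfolding alpha_eq using dpos by simp
  have K1: "h * inner d (x - xs) \<ge> h\<^sup>2 * N"
  proof -
    have ax: "inner a (x - xs) \<ge> n\<^sup>2 / L"
      using cocoerc[OF convex grad lip Lpos xs, of x] by (simp add: a_def n_def)
    have bz: "inner b (z - xs) \<ge> 0" using monot0[OF convex grad xs, of z] by (simp add: b_def)
    have bx: "inner b (x - xs) = inner b (z - xs) + h * inner a b"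
    proof -
      have "x - xs = (z - xs) + h *\<^sub>R a" using xz by (simp add: algebra_simps)
      then have "inner b (x - xs) = inner b ((z - xs) + h *\<^sub>R a)" by (rule arg_cong)
      also have "\<dots> = inner b (z - xs) + h * inner a b"
        by (simp only: inner_add_right inner_scaleR_right inner_commute)
      finally show ?thesis .
    qed
    have de: "inner d (x - xs) = (1 - \<beta>) * inner a (x - xs) + \<beta> * inner b (x - xs)"
      by (simp add: d_eq inner_add_left inner_diff_left algebra_simps)
    have q: "h / L \<ge> h\<^sup>2 * (1 - L * h / 4)"
    proof -
      have "h / L - h\<^sup>2 * (1 - L * h / 4) = (h / L) * (1 - L * h / 2)\<^sup>2"
        using Lpos by (simp add: power2_eq_square field_simps)
      moreover have "(h / L) * (1 - L * h / 2)\<^sup>2 \<ge> 0" using hpos Lpos by simp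
      ultimately show ?thesis by linarith
    qed
    have "(1 - \<beta>) * (h * (n\<^sup>2 / L)) \<le> (1 - \<beta>) * (h * inner a (x - xs))"
      using ax beta hpos by (intro mult_left_mono) auto
    moreover have "(1 - \<beta>) * (h\<^sup>2 * (1 - L * h / 4) * n\<^sup>2) \<le> (1 - \<beta>) * (h * (n\<^sup>2 / L))"
    proof -
      have "h\<^sup>2 * (1 - L * h / 4) * n\<^sup>2 \<le> h / L * n\<^sup>2" using q by (intro mult_right_mono) auto
      then show ?thesis using beta by (intro mult_left_mono) auto
    qed
    moreover have "\<beta> * (h * inner b (z - xs)) \<ge> 0" using beta hpos bz by simp
    ultimately show ?thesis unfolding de N_def bx
      by (simp add: algebra_simps power2_eq_square)
  qed
  define s where "s = \<eta> * \<alpha> * h"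
  have exp: "(norm (x - s *\<^sub>R d - xs))\<^sup>2 = (norm (x - xs))\<^sup>2 - 2 * s * inner d (x - xs) + s\<^sup>2 * (norm d)\<^sup>2"
  proof -
    have "x - s *\<^sub>R d - xs = (x - xs) - s *\<^sub>R d" by simp
    then show ?thesis
      by (simp only: power2_norm_eq_inner inner_diff_left inner_diff_right inner_scaleR_left inner_scaleR_right)
         (simp add: inner_commute power2_eq_square algebra_simps)
  qed
  have t1: "2 * s * inner d (x - xs) \<ge> 2 * \<eta> * \<alpha> * (h\<^sup>2 * N)"
  proof -
    have "2 * \<eta> * \<alpha> * (h\<^sup>2 * N) \<le> 2 * \<eta> * \<alpha> * (h * inner d (x - xs))"
      using K1 eta apos by (intro mult_left_mono) auto
    then show ?thesis by (simp add: s_def algebra_simps)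
  qed
  have t2: "s\<^sup>2 * (norm d)\<^sup>2 = \<eta>\<^sup>2 * \<alpha> * h\<^sup>2 * N"
    by (simp add: s_def aN[symmetric] power2_eq_square algebra_simps)
  have main: "(norm (x - s *\<^sub>R d - xs))\<^sup>2 \<le> (norm (x - xs))\<^sup>2 - \<eta> * (2 - \<eta>) * h\<^sup>2 * (\<alpha> * N)"
    using exp t1 t2 by (simp add: power2_eq_square algebra_simps)
  have Dpos: "D > 0" unfolding D_def by (simp add: add_pos_nonneg)
  have aNlow: "\<alpha> * N \<ge> c / D * c * n\<^sup>2"
  proof -
    have "\<alpha> * N = N\<^sup>2 / (norm d)\<^sup>2" unfolding alpha_eq by (simp add: power2_eq_square)
    also have "\<dots> \<ge> N\<^sup>2 / (D * n\<^sup>2)"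
      using d2 dpos Dpos npos by (intro divide_left_mono) auto
    also have "N\<^sup>2 / (D * n\<^sup>2) \<ge> (c * n\<^sup>2)\<^sup>2 / (D * n\<^sup>2)"
      using Nc cpos npos Dpos by (intro divide_right_mono power_mono) auto
    also have "(c * n\<^sup>2)\<^sup>2 / (D * n\<^sup>2) = c / D * c * n\<^sup>2"
      using npos Dpos by (simp add: power2_eq_square field_simps)
    finally show ?thesis by linarith
  qed
  have hh: "hmin\<^sup>2 \<le> h\<^sup>2" using hmin by (intro power_mono) auto
  have "\<eta> * (2 - \<eta>) * (c / D) * c * hmin\<^sup>2 * n\<^sup>2 \<le> \<eta> * (2 - \<eta>) * h\<^sup>2 * (\<alpha> * N)"
  proof -
    have e: "\<eta> * (2 - \<eta>) \<ge> 0" using eta by simp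
    have "c / D * c * n\<^sup>2 \<ge> 0" using cpos Dpos by simp
    then have "hmin\<^sup>2 * (c / D * c * n\<^sup>2) \<le> h\<^sup>2 * (\<alpha> * N)"
      using hh aNlow by (meson mult_mono zero_le_power2 order_trans)
    then have "\<eta> * (2 - \<eta>) * (hmin\<^sup>2 * (c / D * c * n\<^sup>2)) \<le> \<eta> * (2 - \<eta>) * (h\<^sup>2 * (\<alpha> * N))"
      using e by (intro mult_left_mono) auto
    moreover have "\<eta> * (2 - \<eta>) * (c / D) * c * hmin\<^sup>2 * n\<^sup>2 = \<eta> * (2 - \<eta>) * (hmin\<^sup>2 * (c / D * c * n\<^sup>2))"
      by (simp only: mult_ac)
    moreover have "\<eta> * (2 - \<eta>) * h\<^sup>2 * (\<alpha> * N) = \<eta> * (2 - \<eta>) * (h\<^sup>2 * (\<alpha> * N))"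
      by (simp only: mult_ac)
    ultimately show ?thesis by linarith
  qed
  with main show ?thesis by (simp add: s_def D_def n_def a_def)
qed


theorem theorem6:
  fixes f :: "real ^ 'n \<Rightarrow> real" and g :: "real ^ 'n \<Rightarrow> real ^ 'n"
    and L \<mu> \<nu> hlo hup \<gamma>00 \<beta> \<theta> \<tau> \<eta> :: real and x0 :: "real ^ 'n"
  assumes convex: "convex_on UNIV f"
    and grad: "\<And>x. GDERIV f x :> g x"
    and lip: "L-lipschitz_on UNIV g"
    and Lpos: "L > 0"
    and nonempty: "\<exists>x. g x = 0"
    and par_mu_nu: "0 < \<mu>" "\<mu> < \<nu>" "\<nu> < 1"
    and par_h: "0 < hlo" "hlo < 1" "1 \<le> \<gamma>00" "\<gamma>00 \<le> hup" "hup < 4 / L"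
    and par_beta: "0 \<le> \<beta>" "\<beta> \<le> 1"
    and par_theta: "0 < \<theta>" "\<theta> < 1"
    and par_tau: "\<tau> > 1"
    and par_eta: "0 < \<eta>" "\<eta> < 2"
    and nonstop: "\<And>k. g (fst (alg3 g L \<mu> \<nu> hlo hup \<beta> \<theta> \<tau> \<eta> x0 \<gamma>00 k)) \<noteq> 0"
  shows "\<forall>xs K. g xs = 0 \<longrightarrow> K \<ge> 1 \<longrightarrow>
    (let x = (\<lambda>k. fst (alg3 g L \<mu> \<nu> hlo hup \<beta> \<theta> \<tau> \<eta> x0 \<gamma>00 k));
         c = (1 - \<beta>) * (1 - L * hup / 4) + \<beta> * (1 - \<nu>);
         \<alpha>min = c / (2 + 2 * \<beta>\<^sup>2 * \<nu>\<^sup>2);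
         \<kappa>4 = \<eta> * (2 - \<eta>) * \<alpha>min * c;
         hmin = min hlo (\<nu> * \<theta> / (hup * (max L 1)\<^sup>2))
     in (1 / real K) * (\<Sum>k<K. (norm (g (x k)))\<^sup>2)
          \<le> (norm (x0 - xs))\<^sup>2 / (real K * \<kappa>4 * hmin\<^sup>2))"
proof (intro allI impI)
  fix xs and K :: nat
  assume xs: "g xs = 0" and K: "K \<ge> 1"
  define A where "A = alg3 g L \<mu> \<nu> hlo hup \<beta> \<theta> \<tau> \<eta> x0 \<gamma>00"
  define X where "X = (\<lambda>k. fst (alg3 g L \<mu> \<nu> hlo hup \<beta> \<theta> \<tau> \<eta> x0 \<gamma>00 k))"
  define c where "c = (1 - \<beta>) * (1 - L * hup / 4) + \<beta> * (1 - \<nu>)"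
  define \<alpha>min where "\<alpha>min = c / (2 + 2 * \<beta>\<^sup>2 * \<nu>\<^sup>2)"
  define \<kappa>4 where "\<kappa>4 = \<eta> * (2 - \<eta>) * \<alpha>min * c"
  define hmin where "hmin = min hlo (\<nu> * \<theta> / (hup * (max L 1)\<^sup>2))"
  have hup1: "1 \<le> hup" using par_h by linarith
  have hlohup: "hlo \<le> hup" using par_h by linarith
  have nu0: "0 < \<nu>" using par_mu_nu by linarith
  have hminpos: "hmin > 0" unfolding hmin_def using par_h nu0 par_theta hup1
    by (simp add: zero_less_mult_iff)
  have hmin_le: "hmin \<le> min hlo (\<theta> * \<nu> / L)"
  proof -
    have "L \<le> hup * (max L 1)\<^sup>2"
    proof -
      have "L \<le> max L 1" by simp
      also have "\<dots> \<le> 1 * (max L 1)\<^sup>2"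
        using mult_right_mono[of 1 "max L 1" "max L 1"] by (simp add: power2_eq_square)
      also have "\<dots> \<le> hup * (max L 1)\<^sup>2" using hup1 by (intro mult_right_mono) auto
      finally show ?thesis .
    qed
    then have "\<nu> * \<theta> / (hup * (max L 1)\<^sup>2) \<le> \<nu> * \<theta> / L"
      using Lpos nu0 par_theta by (intro divide_left_mono) auto
    then show ?thesis unfolding hmin_def by (simp add: mult.commute)
  qed
  have cpos: "c > 0"
  proof -
    define m where "m = min (1 - L * hup / 4) (1 - \<nu>)"
    have "L * hup < 4" using par_h(5) Lpos by (simp add: less_divide_eq mult.commute)
    then have mpos: "m > 0" unfolding m_def using par_mu_nu by simp
    have "(1 - \<beta>) * m \<le> (1 - \<beta>) * (1 - L * hup / 4)" using par_beta by (intro mult_left_mono) (auto simp: m_def)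
    moreover have "\<beta> * m \<le> \<beta> * (1 - \<nu>)" using par_beta by (intro mult_left_mono) (auto simp: m_def)
    ultimately have "(1 - \<beta>) * m + \<beta> * m \<le> c" unfolding c_def by linarith
    then show ?thesis using mpos by (simp add: algebra_simps)
  qed
  have kpos: "\<kappa>4 > 0" unfolding \<kappa>4_def \<alpha>min_def using cpos par_eta
    by (simp add: add_pos_nonneg)
  have G: "hlo \<le> snd (A k) \<and> snd (A k) \<le> hup" for k
  proof (induction k)
    case 0 then show ?case using par_h by (simp add: A_def)
  next
    case (Suc k)
    show ?case using hlohup
      by (simp add: A_def alg3_step_def Let_def proj_interval_def)
  qed
  have step: "(norm (X (Suc k) - xs))\<^sup>2 \<le> (norm (X k - xs))\<^sup>2 - \<kappa>4 * hmin\<^sup>2 * (norm (g (X k)))\<^sup>2" for k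
  proof -
    obtain x \<gamma> where s: "A k = (x, \<gamma>)" by (cases "A k")
    have Xk: "X k = x" using s by (simp add: X_def A_def)
    have gam: "hlo \<le> \<gamma>" "\<gamma> \<le> hup" using G[of k] s by auto
    have gx: "g x \<noteq> 0" using nonstop[of k] Xk by (simp add: X_def)
    define h where "h = linesearch g \<nu> \<theta> x \<gamma>"
    have g0: "\<gamma> > 0" using gam par_h by linarith
    note LS = linesearch_props[OF lip Lpos gx nu0 par_mu_nu(3) par_theta g0]
    have hpos: "0 < h" and hg: "h \<le> \<gamma>" and rh: "ratio g x h \<le> \<nu>"
      and hlow: "min \<gamma> (\<theta> * \<nu> / L) \<le> h" using LS by (simp_all add: h_def)
    have hup': "h \<le> hup" using hg gam by linarith
    have hminh: "hmin \<le> h"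
    proof -
      have "min hlo (\<theta> * \<nu> / L) \<le> min \<gamma> (\<theta> * \<nu> / L)" using gam by simp
      then show ?thesis using hmin_le hlow by linarith
    qed
    note ineq = step_ineq[OF convex grad lip Lpos xs gx hpos hup' par_h(5) rh nu0 par_mu_nu(3) par_beta par_eta
        less_imp_le[OF hminpos] hminh refl refl refl refl]
    have XS: "X (Suc k) = x - (\<eta> * (((1 - \<beta>) * (1 - L * h / 4) * (norm (x - (x - h *\<^sub>R g x)))\<^sup>2 + \<beta> * inner (x - (x - h *\<^sub>R g x)) (h *\<^sub>R g (x - h *\<^sub>R g x))) / (h\<^sup>2 * (norm (g x - \<beta> *\<^sub>R (g x - g (x - h *\<^sub>R g x))))\<^sup>2)) * h) *\<^sub>R (g x - \<beta> *\<^sub>R (g x - g (x - h *\<^sub>R g x)))" (is "_ = ?rhs")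
    proof -
      have "X (Suc k) = fst (alg3_step g L \<mu> \<nu> hlo hup \<beta> \<theta> \<tau> \<eta> (x, \<gamma>))"
        using s by (simp add: X_def A_def)
      also have "\<dots> = ?rhs" by (simp only: alg3_step_def Let_def fst_conv snd_conv h_def)
      finally show ?thesis .
    qed
    show ?thesis using ineq unfolding XS Xk \<kappa>4_def \<alpha>min_def c_def
      by (simp add: mult_ac)
  qed
  have tele: "(norm (X n - xs))\<^sup>2 \<le> (norm (x0 - xs))\<^sup>2 - \<kappa>4 * hmin\<^sup>2 * (\<Sum>k<n. (norm (g (X k)))\<^sup>2)" for n
  proof (induction n)
    case 0 then show ?case by (simp add: X_def)
  next
    case (Suc n)
    then show ?case using step[of n] by (simp add: algebra_simps)
  qed
  have P: "\<kappa>4 * hmin\<^sup>2 > 0" using kpos hminpos by simp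
  have "\<kappa>4 * hmin\<^sup>2 * (\<Sum>k<K. (norm (g (X k)))\<^sup>2) \<le> (norm (x0 - xs))\<^sup>2"
    using tele[of K] by (smt (verit) zero_le_power2)
  then have S: "(\<Sum>k<K. (norm (g (X k)))\<^sup>2) \<le> (norm (x0 - xs))\<^sup>2 / (\<kappa>4 * hmin\<^sup>2)"
    using P by (simp add: le_divide_eq mult.commute)
  have Kpos: "real K > 0" using K by simp
  have final: "(1 / real K) * (\<Sum>k<K. (norm (g (X k)))\<^sup>2) \<le> (norm (x0 - xs))\<^sup>2 / (real K * \<kappa>4 * hmin\<^sup>2)"
  proof -
    have "(1 / real K) * (\<Sum>k<K. (norm (g (X k)))\<^sup>2) \<le> (1 / real K) * ((norm (x0 - xs))\<^sup>2 / (\<kappa>4 * hmin\<^sup>2))"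
      using S Kpos by (intro mult_left_mono) auto
    also have "\<dots> = (norm (x0 - xs))\<^sup>2 / (real K * \<kappa>4 * hmin\<^sup>2)" by (simp add: mult.assoc)
    finally show ?thesis .
  qed
  show "let x = (\<lambda>k. fst (alg3 g L \<mu> \<nu> hlo hup \<beta> \<theta> \<tau> \<eta> x0 \<gamma>00 k));
         c = (1 - \<beta>) * (1 - L * hup / 4) + \<beta> * (1 - \<nu>);
         \<alpha>min = c / (2 + 2 * \<beta>\<^sup>2 * \<nu>\<^sup>2);
         \<kappa>4 = \<eta> * (2 - \<eta>) * \<alpha>min * c;
         hmin = min hlo (\<nu> * \<theta> / (hup * (max L 1)\<^sup>2))
     in (1 / real K) * (\<Sum>k<K. (norm (g (x k)))\<^sup>2)
          \<le> (norm (x0 - xs))\<^sup>2 / (real K * \<kappa>4 * hmin\<^sup>2)"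
    using final unfolding Let_def X_def \<kappa>4_def \<alpha>min_def c_def hmin_def .
qed

end
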